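(* For every $l\in\mathbb N$, the intersection of the real curve $\Gamma_l(\mathbb R)=\{(\lambda,\mu)\in\mathbb R^2: P_l(\lambda,\mu^2)=0\}$ with the open half-plane $\{\mu>0\}$ consists of $l$ pairwise non-intersecting smooth curves, none of which has a horizontal tangent line $\{\mu=\mathrm{const}\}$.
   Context: For $l\in\mathbb N$ and $\mu\in\mathbb C$, $H_l$ is the tridiagonal $l\times l$ matrix with entries $H_{l;jj}=(1-j)(l-j+1)$, $H_{l;j,j+1}=\mu j$, $H_{l;j,j-1}=\mu(l-j+1)$, and $H_{l;ij}=0$ if $|i-j|\geq 2$. It is known that $\det(H_l+\lambda\,\mathrm{Id})$ is a polynomial of degree $l$ in $(\lambda,\mu^2)$, written $P_l(\lambda,\mu^2)$. *)

theory Defs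
  imports "HOL-Analysis.Analysis" "Jordan_Normal_Form.Determinant"
begin

text \<open>The tridiagonal l x l matrix H_l(mu), with 0-based indices i, j
  (paper index = our index + 1):
  diagonal  (1-(i+1))(l-(i+1)+1) = -i (l-i),
  superdiagonal (i,i+1): mu (i+1),
  subdiagonal (i,i-1): mu (l-(i+1)+1) = mu (l-i).\<close>
definition H :: "nat \<Rightarrow> 'a::comm_ring_1 \<Rightarrow> 'a mat" where
  "H l \<mu> = mat l l (\<lambda>(i,j).
      if j = i then - (of_nat i) * (of_nat l - of_nat i)
      else if j = i + 1 then \<mu> * of_nat (i + 1)
      else if i = j + 1 then \<mu> * (of_nat l - of_nat i)
      else 0)"

text \<open>P_l(lambda, mu^2) = det(H_l(mu) + lambda Id).\<close>
definition P_det :: "nat \<Rightarrow> 'a::comm_ring_1 \<Rightarrow> 'a \<Rightarrow> 'a" where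
  "P_det l x \<mu> = det (H l \<mu> + x \<cdot>\<^sub>m 1\<^sub>m l)"

definition smooth_on :: "(real \<Rightarrow> real) \<Rightarrow> real set \<Rightarrow> bool" where
  "smooth_on f S \<longleftrightarrow> (\<forall>n. \<forall>x\<in>S. ((deriv ^^ n) f) differentiable (at x))"

end

theory Submission
  imports Defs
begin
datatype ex = C real | X | M | I | Add ex ex | Mul ex ex

fun ev :: "ex \<Rightarrow> real \<Rightarrow> real \<Rightarrow> real \<Rightarrow> real" where
  "ev (C c) x m i = c"
| "ev X x m i = x"
| "ev M x m i = m"
| "ev I x m i = i"
| "ev (Add a b) x m i = ev a x m i + ev b x m i"
| "ev (Mul a b) x m i = ev a x m i * ev b x m i"

fun dx :: "ex \<Rightarrow> ex \<Rightarrow> ex \<Rightarrow> ex \<Rightarrow> ex" where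
  "dx dX dM dI (C c) = C 0"
| "dx dX dM dI X = dX"
| "dx dX dM dI M = dM"
| "dx dX dM dI I = dI"
| "dx dX dM dI (Add a b) = Add (dx dX dM dI a) (dx dX dM dI b)"
| "dx dX dM dI (Mul a b) = Add (Mul (dx dX dM dI a) b) (Mul a (dx dX dM dI b))"

fun usesI :: "ex \<Rightarrow> bool" where
  "usesI I = True"
| "usesI (Add a b) = (usesI a \<or> usesI b)"
| "usesI (Mul a b) = (usesI a \<or> usesI b)"
| "usesI _ = False"

lemma ex_chain:
  assumes "(a has_real_derivative ev dX (a t) (b t) (c t)) (at t)"
    and "(b has_real_derivative ev dM (a t) (b t) (c t)) (at t)"
    and "usesI e \<Longrightarrow> (c has_real_derivative ev dI (a t) (b t) (c t)) (at t)"
  shows "((\<lambda>s. ev e (a s) (b s) (c s)) has_real_derivative ev (dx dX dM dI e) (a t) (b t) (c t)) (at t)"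
  using assms(3)
proof (induction e)
  case (Mul e1 e2)
  then show ?case by (auto intro!: derivative_eq_intros)
qed (use assms in \<open>auto intro!: derivative_eq_intros\<close>)

lemma ex_cont: "isCont (\<lambda>p. ev e (fst p) (snd p) i) p0"
  by (induction e) (auto intro!: continuous_intros)

lemma ex_noI: "\<not> usesI e \<Longrightarrow> ev e x m i = ev e x m i'"
  by (induction e) auto

lemma dx_noI: "\<not> usesI dX \<Longrightarrow> \<not> usesI dM \<Longrightarrow> \<not> usesI e \<Longrightarrow> \<not> usesI (dx dX dM dI e)"
  by (induction e) auto

lemma dx_lin: "ev (dx (C p) (C q) (C r) e) x m i =
   p * ev (dx (C 1) (C 0) (C 0) e) x m i + q * ev (dx (C 0) (C 1) (C 0) e) x m i
   + r * ev (dx (C 0) (C 0) (C 1) e) x m i"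
  by (induction e) (auto simp: algebra_simps)

lemma ex_smooth_aux:
  assumes S: "open S"
    and da: "\<And>t. t \<in> S \<Longrightarrow> (a has_real_derivative ev dX (a t) t (c t)) (at t)"
    and dc: "\<And>t. t \<in> S \<Longrightarrow> (c has_real_derivative ev dI (a t) t (c t)) (at t)"
  shows "\<forall>e. \<forall>t\<in>S. (deriv ^^ n) (\<lambda>s. ev e (a s) s (c s)) t
            = ev ((dx dX (C 1) dI ^^ n) e) (a t) t (c t)"
proof (induction n)
  case 0
  then show ?case by simp
next
  case (Suc n)
  show ?case
  proof (intro allI ballI)
    fix e t assume t: "t \<in> S"
    have D: "((\<lambda>s. ev ((dx dX (C 1) dI ^^ n) e) (a s) s (c s)) has_real_derivative
        ev (dx dX (C 1) dI ((dx dX (C 1) dI ^^ n) e)) (a t) t (c t)) (at t)"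
      using ex_chain[where b="\<lambda>s. s" and dM="C 1", of a dX t c "(dx dX (C 1) dI ^^ n) e" dI]
        da[OF t] dc[OF t] by (auto intro!: derivative_eq_intros)
    have D2: "((deriv ^^ n) (\<lambda>s. ev e (a s) s (c s)) has_real_derivative
        ev (dx dX (C 1) dI ((dx dX (C 1) dI ^^ n) e)) (a t) t (c t)) (at t)"
      by (rule has_field_derivative_transform_within_open[OF D S t]) (use Suc t in auto)
    show "(deriv ^^ Suc n) (\<lambda>s. ev e (a s) s (c s)) t = ev ((dx dX (C 1) dI ^^ Suc n) e) (a t) t (c t)"
      using DERIV_imp_deriv[OF D2] by simp
  qed
qed

lemma ex_smooth:
  assumes S: "open S"
    and da: "\<And>t. t \<in> S \<Longrightarrow> (a has_real_derivative ev dX (a t) t (c t)) (at t)"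
    and dc: "\<And>t. t \<in> S \<Longrightarrow> (c has_real_derivative ev dI (a t) t (c t)) (at t)"
  shows "smooth_on a S"
  unfolding smooth_on_def
proof (intro allI ballI)
  fix n t assume t: "t \<in> S"
  let ?e = "(dx dX (C 1) dI ^^ n) X"
  have D: "((\<lambda>s. ev ?e (a s) s (c s)) has_real_derivative
        ev (dx dX (C 1) dI ?e) (a t) t (c t)) (at t)"
      using ex_chain[where b="\<lambda>s. s" and dM="C 1", of a dX t c ?e dI]
        da[OF t] dc[OF t] by (auto intro!: derivative_eq_intros)
  have A: "\<And>x. x \<in> S \<Longrightarrow> (deriv ^^ n) a x = ev ?e (a x) x (c x)"
  proof -
    have "\<forall>t\<in>S. (deriv ^^ n) (\<lambda>s. ev X (a s) s (c s)) t = ev ?e (a t) t (c t)"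
      using ex_smooth_aux[OF S da dc, of n] by blast
    then show "\<And>x. x \<in> S \<Longrightarrow> (deriv ^^ n) a x = ev ?e (a x) x (c x)" by simp
  qed
  have D2: "((deriv ^^ n) (\<lambda>s. ev X (a s) s (c s)) has_real_derivative
        ev (dx dX (C 1) dI ?e) (a t) t (c t)) (at t)"
    by (rule has_field_derivative_transform_within_open[OF D S t]) (simp add: A)
  have "(\<lambda>s. ev X (a s) s (c s)) = a" by simp
  then show "(deriv ^^ n) a differentiable at t"
    using D2 real_differentiable_def by metis
qed

abbreviation "pX e \<equiv> dx (C 1) (C 0) (C 0) e"
abbreviation "pM e \<equiv> dx (C 0) (C 1) (C 0) e"

lemma implicit_deriv:
  assumes S: "open S" "t \<in> S"
    and zero: "\<And>s. s \<in> S \<Longrightarrow> ev e (a s) s 0 = 0"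
    and cont: "isCont a t"
    and nz: "ev (pX e) (a t) t 0 \<noteq> 0"
  shows "(a has_real_derivative - ev (pM e) (a t) t 0 / ev (pX e) (a t) t 0) (at t)"
proof -
  define Px where "Px = (\<lambda>p. ev (pX e) (fst p) (snd p) 0)"
  define Pm where "Pm = (\<lambda>p. ev (pM e) (fst p) (snd p) 0)"
  define p0 where "p0 = (a t, t)"
  have "\<forall>s\<in>S. \<exists>z. 0 < z \<and> z < 1 \<and>
      0 = (a s - a t) * Px (a t + z * (a s - a t), t + z * (s - t))
          + (s - t) * Pm (a t + z * (a s - a t), t + z * (s - t))"
  proof
    fix s assume s: "s \<in> S"
    define \<phi> where "\<phi> = (\<lambda>u. ev e (a t + u * (a s - a t)) (t + u * (s - t)) ((\<lambda>_. 0) u))"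
    have D: "DERIV \<phi> u :> ((a s - a t) * Px (a t + u * (a s - a t), t + u * (s - t))
          + (s - t) * Pm (a t + u * (a s - a t), t + u * (s - t)))" for u
    proof -
      have "DERIV \<phi> u :> ev (dx (C (a s - a t)) (C (s - t)) (C 0) e)
           (a t + u * (a s - a t)) (t + u * (s - t)) ((\<lambda>_. 0) u)"
        unfolding \<phi>_def
        by (rule ex_chain) (auto intro!: derivative_eq_intros)
      then show ?thesis by (subst (asm) dx_lin) (simp add: Px_def Pm_def)
    qed
    obtain z where "0 < z" "z < 1" "\<phi> 1 - \<phi> 0 = (1 - 0) * ((a s - a t) * Px (a t + z * (a s - a t), t + z * (s - t))
          + (s - t) * Pm (a t + z * (a s - a t), t + z * (s - t)))"
      using MVT2[of 0 1 \<phi>, OF _ D] by auto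
    moreover have "\<phi> 1 = 0" "\<phi> 0 = 0" using zero[OF s] zero[OF S(2)] by (auto simp: \<phi>_def)
    ultimately show "\<exists>z. 0 < z \<and> z < 1 \<and>
      0 = (a s - a t) * Px (a t + z * (a s - a t), t + z * (s - t))
          + (s - t) * Pm (a t + z * (a s - a t), t + z * (s - t))" by auto
  qed
  from bchoice[OF this] obtain Z where Z0: "\<forall>s\<in>S. 0 < Z s \<and> Z s < 1 \<and>
      0 = (a s - a t) * Px (a t + Z s * (a s - a t), t + Z s * (s - t))
          + (s - t) * Pm (a t + Z s * (a s - a t), t + Z s * (s - t))"
    by blast
  then have Z: "\<And>s. s \<in> S \<Longrightarrow> 0 < Z s \<and> Z s < 1 \<and>
      0 = (a s - a t) * Px (a t + Z s * (a s - a t), t + Z s * (s - t))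
          + (s - t) * Pm (a t + Z s * (a s - a t), t + Z s * (s - t))" by blast
  define q where "q = (\<lambda>s. (a t + Z s * (a s - a t), t + Z s * (s - t)))"
  have evS: "eventually (\<lambda>s. s \<in> S) (at t)"
    using S eventually_at_topological by blast
  have l1: "((\<lambda>s. Z s * (a s - a t)) \<longlongrightarrow> 0) (at t)"
  proof (rule Lim_null_comparison)
    show "eventually (\<lambda>s. norm (Z s * (a s - a t)) \<le> norm (a s - a t)) (at t)"
      using evS
    proof (rule eventually_mono)
      fix s assume "s \<in> S"
      then have "0 < Z s" "Z s < 1" using Z by auto
      then show "norm (Z s * (a s - a t)) \<le> norm (a s - a t)"
        by (simp add: abs_mult mult_left_le_one_le)
    qed
    have "(a \<longlongrightarrow> a t) (at t)" using cont isCont_def by blast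
    then show "((\<lambda>s. norm (a s - a t)) \<longlongrightarrow> 0) (at t)"
      by (intro tendsto_norm_zero LIM_zero)
  qed
  have l2: "((\<lambda>s. Z s * (s - t)) \<longlongrightarrow> 0) (at t)"
  proof (rule Lim_null_comparison)
    show "eventually (\<lambda>s. norm (Z s * (s - t)) \<le> norm (s - t)) (at t)"
      using evS
    proof (rule eventually_mono)
      fix s assume "s \<in> S"
      then have "0 < Z s" "Z s < 1" using Z by auto
      then show "norm (Z s * (s - t)) \<le> norm (s - t)"
        by (simp add: abs_mult mult_left_le_one_le)
    qed
    show "((\<lambda>s. norm (s - t)) \<longlongrightarrow> 0) (at t)"
      by (intro tendsto_eq_intros) auto
  qed
  have lq: "(q \<longlongrightarrow> p0) (at t)"
    unfolding q_def p0_def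
    using tendsto_add[OF tendsto_const l1, of "a t"] tendsto_add[OF tendsto_const l2, of t]
    by (auto intro!: tendsto_Pair)
  have cPx: "isCont Px p0" unfolding Px_def by (rule ex_cont)
  have cPm: "isCont Pm p0" unfolding Pm_def by (rule ex_cont)
  have nz0: "Px p0 \<noteq> 0" using nz by (simp add: Px_def p0_def)
  have G: "((\<lambda>s. - Pm (q s) / Px (q s)) \<longlongrightarrow> - Pm p0 / Px p0) (at t)"
    by (intro tendsto_intros isCont_tendsto_compose[OF cPx lq] isCont_tendsto_compose[OF cPm lq] nz0)
  have evnz: "eventually (\<lambda>s. Px (q s) \<noteq> 0) (at t)"
    using isCont_tendsto_compose[OF cPx lq] nz0 tendsto_imp_eventually_ne by blast
  have "((\<lambda>s. (a s - a t) / (s - t)) \<longlongrightarrow> - Pm p0 / Px p0) (at t)"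
  proof (rule Lim_transform_eventually[OF G])
    show "eventually (\<lambda>s. - Pm (q s) / Px (q s) = (a s - a t) / (s - t)) (at t)"
    proof -
      have "eventually (\<lambda>s. s \<noteq> t) (at t)" by (simp add: eventually_at_filter)
      with evS evnz show ?thesis
      proof eventually_elim
        case (elim s)
        then have "0 = (a s - a t) * Px (q s) + (s - t) * Pm (q s)" using Z[of s] by (simp add: q_def)
        with elim show ?case by (simp add: field_simps)
      qed
    qed
  qed
  then show ?thesis
    by (simp add: has_field_derivative_iff Px_def Pm_def p0_def)
qed

lemma det_trid:
  fixes F :: "nat \<Rightarrow> nat \<Rightarrow> 'a::comm_ring_1"
  assumes up: "\<And>i j. i + 1 < j \<Longrightarrow> F i j = 0"
    and lo: "\<And>i j. j + 1 < i \<Longrightarrow> F i j = 0"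
  shows "det (mat (Suc (Suc n)) (Suc (Suc n)) (\<lambda>(i,j). F i j)) =
     F (Suc n) (Suc n) * det (mat (Suc n) (Suc n) (\<lambda>(i,j). F i j))
     - F (Suc n) n * F n (Suc n) * det (mat n n (\<lambda>(i,j). F i j))"
proof -
  define A where "A = mat (Suc (Suc n)) (Suc (Suc n)) (\<lambda>(i,j). F i j)"
  have Ac: "A \<in> carrier_mat (Suc (Suc n)) (Suc (Suc n))" by (simp add: A_def)
  have "det A = (\<Sum>j<Suc (Suc n). A $$ (Suc n, j) * cofactor A (Suc n) j)"
    by (rule laplace_expansion_row[OF Ac]) simp
  also have "\<dots> = (\<Sum>j<n. A $$ (Suc n, j) * cofactor A (Suc n) j)
     + A $$ (Suc n, n) * cofactor A (Suc n) n + A $$ (Suc n, Suc n) * cofactor A (Suc n) (Suc n)"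
    by simp
  also have "(\<Sum>j<n. A $$ (Suc n, j) * cofactor A (Suc n) j) = 0"
    by (rule sum.neutral) (auto simp: A_def lo)
  finally have detA: "det A = A $$ (Suc n, n) * cofactor A (Suc n) n + A $$ (Suc n, Suc n) * cofactor A (Suc n) (Suc n)"
    by simp
  have md: "mat_delete A (Suc n) (Suc n) = mat (Suc n) (Suc n) (\<lambda>(i,j). F i j)"
    by (rule eq_matI) (auto simp: A_def mat_delete_def)
  have cof: "cofactor A (Suc n) n = - det (mat n n (\<lambda>(i,j). F i j)) * F n (Suc n)"
  proof -
    define B where "B = mat_delete A (Suc n) n"
    have B: "B = mat (Suc n) (Suc n) (\<lambda>(i,j). F i (if j < n then j else Suc j))"
      by (rule eq_matI) (auto simp: A_def B_def mat_delete_def)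
    have Bc: "B \<in> carrier_mat (Suc n) (Suc n)" by (simp add: B)
    have "det B = (\<Sum>i<Suc n. B $$ (i, n) * cofactor B i n)"
      by (rule laplace_expansion_column[OF Bc]) simp
    also have "\<dots> = (\<Sum>i<n. B $$ (i, n) * cofactor B i n) + B $$ (n, n) * cofactor B n n"
      by simp
    also have "(\<Sum>i<n. B $$ (i, n) * cofactor B i n) = 0"
      by (rule sum.neutral) (auto simp: B up)
    finally have dB: "det B = B $$ (n, n) * cofactor B n n" by simp
    have mB: "mat_delete B n n = mat n n (\<lambda>(i,j). F i j)"
      by (rule eq_matI) (auto simp: B mat_delete_def)
    have "det B = F n (Suc n) * det (mat n n (\<lambda>(i,j). F i j))"
      using dB mB by (simp add: B cofactor_def)
    then show ?thesis
      by (simp add: cofactor_def B_def[symmetric])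
  qed
  show ?thesis
    using detA cof md by (simp add: A_def cofactor_def algebra_simps)
qed

lemma det_one_by_one: "det (mat (Suc 0) (Suc 0) (\<lambda>(i,j). F i j)) = (F 0 0 :: 'a::comm_ring_1)"
proof -
  have "det (mat (Suc 0) (Suc 0) (\<lambda>(i,j). F i j)) =
     (\<Sum>j<Suc 0. (mat (Suc 0) (Suc 0) (\<lambda>(i,j). F i j)) $$ (0, j) * cofactor (mat (Suc 0) (Suc 0) (\<lambda>(i,j). F i j)) 0 j)"
    by (rule laplace_expansion_row) auto
  also have "\<dots> = F 0 0"
  proof -
    have "mat_delete (mat (Suc 0) (Suc 0) (\<lambda>(i,j). F i j)) 0 0 \<in> carrier_mat 0 0"
      by (simp add: mat_delete_def)
    then show ?thesis by (simp add: cofactor_def)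
  qed
  finally show ?thesis .
qed


definition Fe :: "nat \<Rightarrow> real \<Rightarrow> real \<Rightarrow> nat \<Rightarrow> nat \<Rightarrow> real" where
  "Fe l x \<mu> i j = (if j = i then - (of_nat i) * (of_nat l - of_nat i) + x
      else if j = i + 1 then \<mu> * of_nat (i + 1)
      else if i = j + 1 then \<mu> * (of_nat l - of_nat i) else 0)"

lemma H_eq: "H l \<mu> + x \<cdot>\<^sub>m 1\<^sub>m l = mat l l (\<lambda>(i,j). Fe l x \<mu> i j)"
  by (rule eq_matI) (auto simp: H_def Fe_def)

fun Dd :: "nat \<Rightarrow> nat \<Rightarrow> real \<Rightarrow> real \<Rightarrow> real" where
  "Dd l 0 x \<mu> = 1"
| "Dd l (Suc 0) x \<mu> = x"
| "Dd l (Suc (Suc k)) x \<mu> = (x - of_nat (Suc k) * (of_nat l - of_nat (Suc k))) * Dd l (Suc k) x \<mu>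
     - \<mu> * \<mu> * (of_nat (Suc k) * (of_nat l - of_nat (Suc k))) * Dd l k x \<mu>"

lemma det_Fe: "det (mat k k (\<lambda>(i,j). Fe l x \<mu> i j)) = Dd l k x \<mu>"
proof (induction l k x \<mu> rule: Dd.induct)
  case (1 l x \<mu>)
  then show ?case by (simp add: det_dim_zero)
next
  case (2 l x \<mu>)
  then show ?case by (simp add: det_one_by_one Fe_def)
next
  case (3 l k x \<mu>)
  have "det (mat (Suc (Suc k)) (Suc (Suc k)) (\<lambda>(i,j). Fe l x \<mu> i j)) =
     Fe l x \<mu> (Suc k) (Suc k) * det (mat (Suc k) (Suc k) (\<lambda>(i,j). Fe l x \<mu> i j))
     - Fe l x \<mu> (Suc k) k * Fe l x \<mu> k (Suc k) * det (mat k k (\<lambda>(i,j). Fe l x \<mu> i j))"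
    by (rule det_trid) (auto simp: Fe_def)
  then show ?case using 3 by (simp add: Fe_def algebra_simps)
qed

lemma P_det_Dd: "P_det l x \<mu> = Dd l l x \<mu>"
  unfolding P_det_def H_eq det_Fe ..

fun De :: "nat \<Rightarrow> nat \<Rightarrow> ex" where
  "De l 0 = C 1"
| "De l (Suc 0) = X"
| "De l (Suc (Suc k)) = Add (Mul (Add X (C (- (of_nat (Suc k) * (of_nat l - of_nat (Suc k)))))) (De l (Suc k)))
     (Mul (C (- (of_nat (Suc k) * (of_nat l - of_nat (Suc k))))) (Mul (Mul M M) (De l k)))"

lemma ev_De: "ev (De l k) x m i = Dd l k x m"
  by (induction l k rule: De.induct) (simp_all add: algebra_simps)

lemma noI_De: "\<not> usesI (De l k)"
  by (induction l k rule: De.induct) simp_all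

fun Dp :: "nat \<Rightarrow> nat \<Rightarrow> real \<Rightarrow> real poly" where
  "Dp l 0 \<mu> = 1"
| "Dp l (Suc 0) \<mu> = [:0, 1:]"
| "Dp l (Suc (Suc k)) \<mu> = [:- (of_nat (Suc k) * (of_nat l - of_nat (Suc k))), 1:] * Dp l (Suc k) \<mu>
     + Polynomial.smult (- (\<mu> * \<mu> * (of_nat (Suc k) * (of_nat l - of_nat (Suc k))))) (Dp l k \<mu>)"

lemma poly_Dp: "poly (Dp l k \<mu>) x = Dd l k x \<mu>"
  by (induction l k \<mu> rule: Dp.induct) (simp_all add: algebra_simps)

lemma deg_Dp: "degree (Dp l k \<mu>) = k \<and> coeff (Dp l k \<mu>) k = 1"
proof (induction l k \<mu> rule: Dp.induct)
  case (3 l k \<mu>)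
  define q where "q = [:- (of_nat (Suc k) * (of_nat l - of_nat (Suc k))), 1:] * Dp l (Suc k) \<mu>"
  define r where "r = Polynomial.smult (- (\<mu> * \<mu> * (of_nat (Suc k) * (of_nat l - of_nat (Suc k))))) (Dp l k \<mu>)"
  have nz: "Dp l (Suc k) \<mu> \<noteq> 0" using 3 by (metis coeff_0 zero_neq_one)
  have dq: "degree q = Suc (Suc k)" unfolding q_def
    using 3 nz by (subst degree_mult_eq) auto
  have cq: "coeff q (Suc (Suc k)) = 1"
  proof -
    have "coeff q (Suc (Suc k)) = lead_coeff q" using dq by simp
    also have "\<dots> = 1" unfolding q_def lead_coeff_mult using 3 by simp
    finally show ?thesis .
  qed
  have dr: "degree r < Suc (Suc k)" unfolding r_def using 3 by (simp add: degree_smult_le le_less_trans)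
  have "degree (q + r) = Suc (Suc k)" using dq dr by (simp add: degree_add_eq_left)
  moreover have "coeff (q + r) (Suc (Suc k)) = 1" using cq dr by (simp add: coeff_eq_0)
  ultimately show ?case by (simp add: q_def r_def)
qed auto

lemma monic_prod_poly:
  fixes r :: "nat \<Rightarrow> real"
  shows "degree (\<Prod>j<n. [:- r j, 1:]) = n \<and> coeff (\<Prod>j<n. [:- r j, 1:]) n = 1"
proof (induction n)
  case (Suc n)
  let ?q = "\<Prod>j<n. [:- r j, 1:]"
  have nz: "?q \<noteq> 0" using Suc by (metis coeff_0 zero_neq_one)
  have d: "degree (?q * [:- r n, 1:]) = Suc n" using Suc nz by (subst degree_mult_eq) auto
  have "coeff (?q * [:- r n, 1:]) (Suc n) = lead_coeff (?q * [:- r n, 1:])" using d by simp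
  also have "\<dots> = 1" unfolding lead_coeff_mult using Suc by simp
  finally show ?case using d by simp
qed simp

lemma prod_formula:
  fixes p :: "real poly" and r :: "nat \<Rightarrow> real"
  assumes dp: "degree p = n" and cp: "coeff p n = 1"
    and inc: "\<And>i j. i < j \<Longrightarrow> j < n \<Longrightarrow> r i < r j"
    and roots: "\<And>j. j < n \<Longrightarrow> poly p (r j) = 0"
  shows "poly p x = (\<Prod>j<n. x - r j)"
proof -
  define q where "q = (\<Prod>j<n. [:- r j, 1:])"
  have q: "degree q = n" "coeff q n = 1" using monic_prod_poly[where n=n and r=r] by (auto simp: q_def)
  have pq: "poly q x = (\<Prod>j<n. x - r j)" for x by (simp add: q_def poly_prod)
  define d where "d = p - q"
  have "d = 0"
  proof (rule ccontr)
    assume dnz: "d \<noteq> 0"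
    have "degree d \<le> n" unfolding d_def using dp q by (simp add: degree_diff_le)
    moreover have "coeff d n = 0" using cp q by (simp add: d_def)
    moreover have "degree d \<noteq> n" using dnz \<open>coeff d n = 0\<close> by auto
    ultimately have "degree d < n" by simp
    moreover have "card (r ` {..<n}) \<le> card {x. poly d x = 0}"
    proof (rule card_mono)
      show "finite {x. poly d x = 0}" using dnz by (rule poly_roots_finite)
      show "r ` {..<n} \<subseteq> {x. poly d x = 0}"
        using roots pq by (auto simp: d_def)
    qed
    moreover have "card (r ` {..<n}) = n"
    proof -
      have "inj_on r {..<n}"
      proof (rule inj_onI)
        fix i j assume "i \<in> {..<n}" "j \<in> {..<n}" "r i = r j"
        then show "i = j" by (cases i j rule: linorder_cases) (auto dest: inc)
      qed
      then show ?thesis by (simp add: card_image)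
    qed
    moreover have "card {x. poly d x = 0} \<le> degree d" using dnz by (rule card_poly_roots_bound)
    ultimately show False by linarith
  qed
  then show ?thesis using pq by (simp add: d_def)
qed

lemma sign_prod:
  fixes r :: "nat \<Rightarrow> real"
  assumes "finite A" "\<And>j. j \<in> A \<Longrightarrow> x \<noteq> r j"
  shows "0 < (-1) ^ card {j\<in>A. x < r j} * (\<Prod>j\<in>A. x - r j)"
  using assms
proof (induction A rule: finite_induct)
  case empty
  then show ?case by simp
next
  case (insert a A)
  have IH: "0 < (-1) ^ card {j\<in>A. x < r j} * (\<Prod>j\<in>A. x - r j)" using insert by auto
  have fin: "finite {j\<in>A. x < r j}" using insert by auto
  show ?case
  proof (cases "x < r a")
    case True
    then have "{j\<in>insert a A. x < r j} = insert a {j\<in>A. x < r j}" by auto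
    then have "card {j\<in>insert a A. x < r j} = Suc (card {j\<in>A. x < r j})"
      using fin insert by auto
    then have "(-1) ^ card {j\<in>insert a A. x < r j} * (\<Prod>j\<in>insert a A. x - r j)
        = ((-1) ^ card {j\<in>A. x < r j} * (\<Prod>j\<in>A. x - r j)) * (r a - x)"
      using insert by (simp add: algebra_simps)
    then show ?thesis using IH True by simp
  next
    case False
    then have "{j\<in>insert a A. x < r j} = {j\<in>A. x < r j}" by auto
    moreover have "x > r a" using False insert.prems[of a] by auto
    ultimately have "(-1) ^ card {j\<in>insert a A. x < r j} * (\<Prod>j\<in>insert a A. x - r j)
        = ((-1) ^ card {j\<in>A. x < r j} * (\<Prod>j\<in>A. x - r j)) * (x - r a)"
      using insert by (simp add: algebra_simps)
    then show ?thesis using IH \<open>x > r a\<close> by simp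
  qed
qed

lemma poly_pos_inf:
  fixes p :: "real poly"
  assumes "0 < lead_coeff p" "0 < degree p"
  shows "\<exists>Xb. \<forall>x\<ge>Xb. Mb \<le> poly p x"
  using assms
proof (induction p arbitrary: Mb rule: pCons_induct)
  case 0
  then show ?case by simp
next
  case (pCons a p)
  then have pnz: "p \<noteq> 0" by auto
  have lc: "lead_coeff p > 0" using pCons pnz by simp
  show ?case
  proof (cases "degree p = 0")
    case True
    then obtain c where c: "p = [:c:]" by (metis degree_eq_zeroE)
    then have cpos: "c > 0" using lc by simp
    show ?thesis
    proof (intro exI allI impI)
      fix x assume "(Mb - a) / c \<le> x"
      then have "Mb - a \<le> x * c" using cpos by (simp add: divide_le_eq)
      then show "Mb \<le> poly (pCons a p) x" using c by simp
    qed
  next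
    case False
    then obtain Xc where Xc: "\<forall>x\<ge>Xc. 1 \<le> poly p x" using pCons.IH[OF lc] by blast
    show ?thesis
    proof (intro exI allI impI)
      fix x assume x: "max Xc (max 0 (Mb - a)) \<le> x"
      then have "1 \<le> poly p x" "0 \<le> x" "Mb - a \<le> x" using Xc by auto
      then have "x \<le> x * poly p x" using mult_left_mono[of 1 "poly p x" x] by simp
      then show "Mb \<le> poly (pCons a p) x" using \<open>Mb - a \<le> x\<close> by simp
    qed
  qed
qed

lemma poly_pos_minf:
  fixes p :: "real poly"
  assumes "0 < lead_coeff p" "0 < degree p"
  shows "\<exists>Xb. \<forall>x\<le>Xb. Mb \<le> (-1) ^ degree p * poly p x"
proof -
  define q where "q = Polynomial.smult ((-1) ^ degree p) (pcompose p [:0, -1:])"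
  have dq: "degree q = degree p" by (simp add: q_def degree_pcompose)
  have lc1: "lead_coeff (pcompose p [:0, -1:]) = lead_coeff p * (-1) ^ degree p"
    by (subst lead_coeff_comp) auto
  have "lead_coeff q = (-1) ^ degree p * (lead_coeff p * (-1) ^ degree p)"
    using lc1 dq by (simp add: q_def degree_pcompose)
  also have "\<dots> = lead_coeff p" by (simp add: algebra_simps flip: power_mult_distrib)
  finally have "0 < lead_coeff q" using assms by simp
  then obtain Xb where Xb: "\<forall>x\<ge>Xb. Mb \<le> poly q x" using poly_pos_inf[of q Mb] dq assms by auto
  show ?thesis
  proof (intro exI allI impI)
    fix x assume "x \<le> - Xb"
    then have "Mb \<le> poly q (- x)" using Xb by auto
    then show "Mb \<le> (-1) ^ degree p * poly p x" by (simp add: q_def poly_pcompose)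
  qed
qed

lemma ivt_strict:
  fixes f :: "real \<Rightarrow> real"
  assumes "a < b" "f a * f b < 0" "\<And>x. isCont f x"
  shows "\<exists>x. a < x \<and> x < b \<and> f x = 0"
proof -
  have "(f a < 0 \<and> 0 < f b) \<or> (0 < f a \<and> f b < 0)" using assms(2) by (auto simp: mult_less_0_iff)
  then show ?thesis
  proof
    assume h: "f a < 0 \<and> 0 < f b"
    then obtain x where "a \<le> x" "x \<le> b" "f x = 0" using IVT[of f a 0 b] assms by force
    then show ?thesis using h by (intro exI[of _ x]) (auto simp: less_eq_real_def)
  next
    assume h: "0 < f a \<and> f b < 0"
    then obtain x where "a \<le> x" "x \<le> b" "f x = 0" using IVT2[of f b 0 a] assms by force
    then show ?thesis using h by (intro exI[of _ x]) (auto simp: less_eq_real_def)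
  qed
qed

definition Inv :: "nat \<Rightarrow> real \<Rightarrow> nat \<Rightarrow> bool" where
  "Inv l \<mu> k \<longleftrightarrow> (\<exists>r. (\<forall>i j. i < j \<longrightarrow> j < k \<longrightarrow> r i < r j) \<and>
      (\<forall>x. Dd l k x \<mu> = (\<Prod>j<k. x - r j)) \<and>
      (\<forall>i<k. 0 < (-1) ^ (k - 1 - i) * Dd l (k - 1) (r i) \<mu>))"

lemma isCont_Dd: "isCont (\<lambda>x. Dd l k x \<mu>) x"
  unfolding poly_Dp[symmetric] by (rule poly_isCont)

lemma Dd_Suc_Suc: "Dd l (Suc (Suc m)) x \<mu> = (x - real (Suc m) * (real l - real (Suc m))) * Dd l (Suc m) x \<mu>
  - (\<mu> * \<mu> * (real (Suc m) * (real l - real (Suc m)))) * Dd l m x \<mu>"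
  by simp

lemma interlace_step:
  assumes mu: "\<mu> > 0" and n1: "1 \<le> n" and nl: "n < l" and IH: "Inv l \<mu> n"
  shows "Inv l \<mu> (Suc n)"
proof -
  obtain m where nm: "n = Suc m" using n1 by (cases n) auto
  obtain r where rinc: "\<And>i j. i < j \<Longrightarrow> j < n \<Longrightarrow> r i < r j"
    and rprod: "\<And>x. Dd l n x \<mu> = (\<Prod>j<n. x - r j)"
    and rsgn: "\<And>i. i < n \<Longrightarrow> 0 < (-1) ^ (n - 1 - i) * Dd l (n - 1) (r i) \<mu>"
    using IH unfolding Inv_def by blast
  have rmono: "r i \<le> r j" if "i \<le> j" "j < n" for i j
    using rinc[of i j] that by (cases "i = j") auto
  define D' where "D' = (\<lambda>x. Dd l (Suc n) x \<mu>)"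
  define \<beta> where "\<beta> = \<mu> * \<mu> * (real (Suc m) * (real l - real (Suc m)))"
  have \<beta>: "\<beta> > 0" unfolding \<beta>_def using mu nl nm by (simp add: of_nat_less_iff)
  have Dr: "D' (r i) = - \<beta> * Dd l m (r i) \<mu>" if "i < n" for i
  proof -
    have "Dd l n (r i) \<mu> = 0" unfolding rprod using that by (simp add: prod_zero_iff) (use that in blast)
    then show ?thesis unfolding D'_def \<beta>_def nm by (simp only: Dd_Suc_Suc) simp
  qed
  have sr: "0 < (-1) ^ (n - i) * D' (r i)" if "i < n" for i
  proof -
    have "n - i = Suc (m - i)" using that nm by auto
    then have "(-1) ^ (n - i) * D' (r i) = \<beta> * ((-1) ^ (n - 1 - i) * Dd l (n - 1) (r i) \<mu>)"
      using Dr[OF that] nm by simp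
    then show ?thesis using rsgn[OF that] \<beta> by simp
  qed
  define p where "p = Dp l (Suc n) \<mu>"
  have pD: "poly p x = D' x" for x by (simp add: p_def D'_def poly_Dp)
  have dp: "degree p = Suc n" "coeff p (Suc n) = 1" using deg_Dp[of l "Suc n" \<mu>] by (auto simp: p_def)
  then have lcp: "lead_coeff p > 0" by simp
  have dpos: "0 < degree p" using dp by simp
  from poly_pos_inf[OF lcp dpos, of 1] obtain Xa where Xa: "\<forall>x\<ge>Xa. 1 \<le> poly p x" by blast
  from poly_pos_minf[OF lcp dpos, of 1] obtain Xb where Xb: "\<forall>x\<le>Xb. 1 \<le> (-1) ^ degree p * poly p x" by blast
  define X1 where "X1 = max Xa (r m + 1)"
  define X0 where "X0 = min Xb (r 0 - 1)"
  have sX1: "0 < D' X1" using Xa pD[of X1] by (simp add: X1_def) (smt (verit))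
  have sX0: "0 < (-1) ^ Suc n * D' X0" using Xb pD[of X0] dp by (simp add: X0_def) (smt (verit))
  define lo where "lo = (\<lambda>i. if i = 0 then X0 else r (i - 1))"
  define hi where "hi = (\<lambda>i. if i = n then X1 else r i)"
  have slo: "0 < (-1) ^ (Suc n - i) * D' (lo i)" if "i \<le> n" for i
  proof (cases "i = 0")
    case True then show ?thesis using sX0 by (simp add: lo_def)
  next
    case False
    then have "Suc n - i = n - (i - 1)" "i - 1 < n" using that by auto
    then show ?thesis using sr[of "i - 1"] False by (simp add: lo_def)
  qed
  have shi: "0 < (-1) ^ (n - i) * D' (hi i)" if "i \<le> n" for i
  proof (cases "i = n")
    case True then show ?thesis using sX1 by (simp add: hi_def)
  next
    case False
    then show ?thesis using sr[of i] that by (simp add: hi_def)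
  qed
  have lohi: "lo i < hi i" if ile: "i \<le> n" for i
  proof -
    consider "i = 0" | "i = n" | "0 < i" "i < n" using ile by (cases "i = 0"; cases "i = n") auto
    then show ?thesis
    proof cases
      case 1 then show ?thesis using n1 rinc[of 0 0] by (simp add: lo_def hi_def X0_def)
    next
      case 2 then show ?thesis using n1 nm by (simp add: lo_def hi_def X1_def)
    next
      case 3 then show ?thesis using rinc[of "i - 1" i] by (simp add: lo_def hi_def)
    qed
  qed
  have opp: "D' (lo i) * D' (hi i) < 0" if "i \<le> n" for i
  proof -
    define s where "s = ((-1) ^ (n - i) :: real)"
    have ss: "s * s = 1" by (simp add: s_def flip: power2_eq_square power_mult)
    have "(-1) ^ (Suc n - i) = - s" using that by (simp add: s_def Suc_diff_le)
    then have "0 < (- s * D' (lo i)) * (s * D' (hi i))" using slo[OF that] shi[OF that] by (simp add: s_def mult_neg_pos)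
    also have "(- s * D' (lo i)) * (s * D' (hi i)) = - (s * s) * (D' (lo i) * D' (hi i))" by (simp add: algebra_simps)
    finally show ?thesis using ss by simp
  qed
  have "\<forall>i\<in>{..n}. \<exists>x. lo i < x \<and> x < hi i \<and> D' x = 0"
  proof
    fix i assume "i \<in> {..n}"
    then show "\<exists>x. lo i < x \<and> x < hi i \<and> D' x = 0"
      using ivt_strict[OF lohi opp, of i] isCont_Dd unfolding D'_def by auto
  qed
  from bchoice[OF this] obtain s where s: "\<And>i. i \<le> n \<Longrightarrow> lo i < s i \<and> s i < hi i \<and> D' (s i) = 0"
    by auto
  have sinc: "s i < s j" if "i < j" "j < Suc n" for i j
  proof -
    have "hi i \<le> lo j" using that rmono[of i "j - 1"] by (auto simp: hi_def lo_def)
    then show ?thesis using s[of i] s[of j] that by force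
  qed
  have sprod: "Dd l (Suc n) x \<mu> = (\<Prod>j<Suc n. x - s j)" for x
    using prod_formula[OF dp sinc, where x=x] s pD by (auto simp: D'_def)
  have cmp: "(s i < r j) = (i \<le> j) \<and> s i \<noteq> r j" if "i \<le> n" "j < n" for i j
  proof (cases "j < i")
    case True
    then have "r j \<le> lo i" using rmono[of j "i - 1"] that by (auto simp: lo_def)
    then show ?thesis using s[OF that(1)] True by auto
  next
    case False
    then have "hi i \<le> r j" using rmono[of i j] that by (auto simp: hi_def)
    then show ?thesis using s[OF that(1)] False by auto
  qed
  have ssgn: "0 < (-1) ^ (Suc n - 1 - i) * Dd l (Suc n - 1) (s i) \<mu>" if "i < Suc n" for i
  proof -
    have "0 < (-1) ^ card {j\<in>{..<n}. s i < r j} * (\<Prod>j\<in>{..<n}. s i - r j)"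
      by (rule sign_prod) (use cmp that in auto)
    moreover have "{j\<in>{..<n}. s i < r j} = {i..<n}" using cmp that by auto
    ultimately show ?thesis using rprod by simp
  qed
  show ?thesis unfolding Inv_def using sinc sprod ssgn by blast
qed

lemma interlace:
  assumes mu: "\<mu> > 0" and k: "1 \<le> k" "k \<le> l"
  shows "Inv l \<mu> k"
  using k
proof (induction k rule: dec_induct)
  case base
  show ?case unfolding Inv_def by (rule exI[of _ "\<lambda>_. 0"]) simp
next
  case (step n)
  then show ?case using interlace_step[OF mu] by simp
qed

lemma roots_struct:
  assumes mu: "\<mu> > 0"
  shows "\<exists>r. (\<forall>i j. i < j \<longrightarrow> j < l \<longrightarrow> r i < r j) \<and> (\<forall>x. P_det l x \<mu> = (\<Prod>j<l. (x::real) - r j))"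
proof (cases "l = 0")
  case True
  then show ?thesis unfolding P_det_Dd by simp
next
  case False
  then show ?thesis using interlace[OF mu, of l l] unfolding Inv_def P_det_Dd by auto
qed

lemma ex_cont_m: "isCont (\<lambda>m. ev e x m i) m0"
  by (induction e) (auto intro!: continuous_intros)

lemma sorted_img:
  fixes g :: "nat \<Rightarrow> real"
  assumes inc: "\<And>i j. i < j \<Longrightarrow> j < n \<Longrightarrow> g i < g j"
  shows "sorted_list_of_set (g ` {..<n}) = map g [0..<n]"
proof -
  have inj: "inj_on g {..<n}"
  proof (rule inj_onI)
    fix i j assume "i \<in> {..<n}" "j \<in> {..<n}" "g i = g j"
    then show "i = j" by (cases i j rule: linorder_cases) (auto dest: inc)
  qed
  have "sorted_wrt (<) (map g [0..<n]) \<and> set (map g [0..<n]) = g ` {..<n}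
        \<and> length (map g [0..<n]) = card (g ` {..<n})"
    using inj by (auto simp: sorted_wrt_iff_nth_less card_image inc)
  then show ?thesis by (subst (asm) sorted_list_of_set_unique) auto
qed

definition fr :: "nat \<Rightarrow> nat \<Rightarrow> real \<Rightarrow> real" where
  "fr l j \<mu> = sorted_list_of_set {x. P_det l x \<mu> = (0::real)} ! j"

lemma fr_char:
  assumes mu: "\<mu> > 0"
    and inc: "\<And>i j. i < j \<Longrightarrow> j < l \<Longrightarrow> g i < g j"
    and z: "\<And>i. i < l \<Longrightarrow> P_det l (g i) \<mu> = (0::real)"
    and j: "j < l"
  shows "fr l j \<mu> = g j"
proof -
  obtain r where rinc: "\<And>i j. i < j \<Longrightarrow> j < l \<Longrightarrow> r i < r j"
    and rp: "\<And>x. P_det l x \<mu> = (\<Prod>j<l. (x::real) - r j)"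
    using roots_struct[OF mu, of l] by blast
  have R: "{x. P_det l x \<mu> = (0::real)} = r ` {..<l}"
    by (auto simp: rp prod_zero_iff)
  have injr: "inj_on r {..<l}"
  proof (rule inj_onI)
    fix i j assume "i \<in> {..<l}" "j \<in> {..<l}" "r i = r j"
    then show "i = j" by (cases i j rule: linorder_cases) (auto dest: rinc)
  qed
  have injg: "inj_on g {..<l}"
  proof (rule inj_onI)
    fix i j assume "i \<in> {..<l}" "j \<in> {..<l}" "g i = g j"
    then show "i = j" by (cases i j rule: linorder_cases) (auto dest: inc)
  qed
  have sub: "g ` {..<l} \<subseteq> r ` {..<l}" using z R by auto
  have "g ` {..<l} = r ` {..<l}"
    by (rule card_subset_eq) (use sub injr injg in \<open>auto simp: card_image\<close>)
  then have "{x. P_det l x \<mu> = (0::real)} = g ` {..<l}" using R by simp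
  then show ?thesis unfolding fr_def using sorted_img[OF inc] j by simp
qed

lemma fr_roots:
  assumes mu: "\<mu> > 0"
  shows "\<exists>r. (\<forall>i j. i < j \<longrightarrow> j < l \<longrightarrow> r i < r j) \<and> (\<forall>x. P_det l x \<mu> = (\<Prod>j<l. (x::real) - r j))
     \<and> (\<forall>j<l. fr l j \<mu> = r j)"
proof -
  obtain r where rinc: "\<And>i j. i < j \<Longrightarrow> j < l \<Longrightarrow> r i < r j"
    and rp: "\<And>x. P_det l x \<mu> = (\<Prod>j<l. (x::real) - r j)"
    using roots_struct[OF mu, of l] by blast
  have "\<forall>j<l. fr l j \<mu> = r j"
  proof (intro allI impI)
    fix j assume "j < l"
    show "fr l j \<mu> = r j"
      by (rule fr_char[where g=r, OF mu rinc]) (auto simp: rp prod_zero_iff \<open>j < l\<close>)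
  qed
  then show ?thesis using rinc rp by blast
qed

lemma sign_opp:
  fixes a b :: real
  assumes "0 < (-1) ^ Suc m * a" "0 < (-1) ^ m * b"
  shows "a * b < 0"
  using assms by (cases "even m") (auto simp: mult_less_0_iff)

lemma Pev: "P_det l x s = ev (De l l) x s 0"
  by (simp add: P_det_Dd ev_De)

lemma fr_cont:
  assumes t: "t > 0" and j: "j < l"
  shows "isCont (fr l j) t"
proof -
  obtain r where rinc: "\<And>i j. i < j \<Longrightarrow> j < l \<Longrightarrow> r i < r j"
    and rp: "\<And>x. P_det l x t = (\<Prod>j<l. (x::real) - r j)"
    and rf: "\<And>j. j < l \<Longrightarrow> fr l j t = r j"
    using fr_roots[OF t, of l] by blast
  have rmono: "r i \<le> r k" if "i \<le> k" "k < l" for i k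
    using rinc[of i k] that by (cases "i = k") auto
  show ?thesis unfolding isCont_def tendsto_iff
  proof (intro allI impI)
    fix \<epsilon> :: real assume \<epsilon>: "\<epsilon> > 0"
    define Gs where "Gs = insert \<epsilon> ((\<lambda>i. (r (Suc i) - r i) / 3) ` {i. Suc i < l})"
    have finG: "finite Gs" unfolding Gs_def
      by (rule finite_insert[THEN iffD2], rule finite_imageI, rule finite_subset[of _ "{..<l}"]) auto
    have posG: "\<forall>g\<in>Gs. 0 < g" unfolding Gs_def using \<epsilon> rinc by auto
    define \<delta> where "\<delta> = Min Gs"
    have \<delta>: "\<delta> > 0" unfolding \<delta>_def using finG posG by (simp add: Min_gr_iff Gs_def)
    have \<delta>\<epsilon>: "\<delta> \<le> \<epsilon>" unfolding \<delta>_def using finG by (simp add: Gs_def)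
    have \<delta>gap: "\<delta> \<le> (r (Suc i) - r i) / 3" if "Suc i < l" for i
      unfolding \<delta>_def using finG that by (intro Min_le) (auto simp: Gs_def)
    have sep: "r i + \<delta> < r k - \<delta>" if "i < k" "k < l" for i k
    proof -
      have "r (Suc i) \<le> r k" using rmono[of "Suc i" k] that by auto
      then show ?thesis using \<delta>gap[of i] that \<delta> by auto
    qed
    have sgn_t: "P_det l (r i - \<delta>) t * P_det l (r i + \<delta>) t < 0" if i: "i < l" for i
    proof (rule sign_opp[of "l - Suc i"])
      have A1: "{k\<in>{..<l}. r i - \<delta> < r k} = {i..<l}"
      proof -
        have "r i - \<delta> < r k \<longleftrightarrow> i \<le> k" if "k < l" for k
          using sep[of k i] rmono[of i k] that i \<delta> by (cases "k < i") auto
        then show ?thesis by auto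
      qed
      have "0 < (-1) ^ card {k\<in>{..<l}. r i - \<delta> < r k} * (\<Prod>k\<in>{..<l}. (r i - \<delta>) - r k)"
      proof (rule sign_prod)
        fix k assume "k \<in> {..<l}"
        then show "r i - \<delta> \<noteq> r k" using sep[of k i] rmono[of i k] i \<delta> by (cases "k < i") auto
      qed simp
      moreover have "Suc (l - Suc i) = l - i" using i by simp
      ultimately show "0 < (-1) ^ Suc (l - Suc i) * P_det l (r i - \<delta>) t" using A1 by (simp add: rp)
      have A2: "{k\<in>{..<l}. r i + \<delta> < r k} = {Suc i..<l}"
      proof -
        have "r i + \<delta> < r k \<longleftrightarrow> Suc i \<le> k" if "k < l" for k
          using sep[of i k] rmono[of k i] that i \<delta> by (cases "i < k") auto
        then show ?thesis by auto
      qed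
      have "0 < (-1) ^ card {k\<in>{..<l}. r i + \<delta> < r k} * (\<Prod>k\<in>{..<l}. (r i + \<delta>) - r k)"
      proof (rule sign_prod)
        fix k assume "k \<in> {..<l}"
        then show "r i + \<delta> \<noteq> r k" using sep[of i k] rmono[of k i] i \<delta> by (cases "i < k") auto
      qed simp
      then show "0 < (-1) ^ (l - Suc i) * P_det l (r i + \<delta>) t" using A2 by (simp add: rp)
    qed
    have contP: "isCont (\<lambda>s. P_det l x s) t" for x
      by (simp only: Pev) (rule ex_cont_m)
    have ev1: "eventually (\<lambda>s. \<forall>i\<in>{..<l}. P_det l (r i - \<delta>) s * P_det l (r i + \<delta>) s < 0) (at t)"
    proof (rule eventually_ball_finite)
      show "\<forall>i\<in>{..<l}. eventually (\<lambda>s. P_det l (r i - \<delta>) s * P_det l (r i + \<delta>) s < 0) (at t)"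
      proof
        fix i assume "i \<in> {..<l}"
        have "isCont (\<lambda>s. P_det l (r i - \<delta>) s * P_det l (r i + \<delta>) s) t"
          by (intro isCont_mult contP)
        then have "((\<lambda>s. P_det l (r i - \<delta>) s * P_det l (r i + \<delta>) s) \<longlongrightarrow>
            P_det l (r i - \<delta>) t * P_det l (r i + \<delta>) t) (at t)" by (simp add: isCont_def)
        then show "eventually (\<lambda>s. P_det l (r i - \<delta>) s * P_det l (r i + \<delta>) s < 0) (at t)"
          by (rule order_tendstoD(2)) (use sgn_t \<open>i \<in> {..<l}\<close> in auto)
      qed
    qed simp
    have ev2: "eventually (\<lambda>s. 0 < s) (at t)"
      using order_tendstoD(1)[OF tendsto_ident_at t] .
    from ev1 ev2 show "eventually (\<lambda>s. dist (fr l j s) (fr l j t) < \<epsilon>) (at t)"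
    proof eventually_elim
      case (elim s)
      have "\<forall>i\<in>{..<l}. \<exists>x. r i - \<delta> < x \<and> x < r i + \<delta> \<and> P_det l x s = 0"
      proof
        fix i assume "i \<in> {..<l}"
        have "isCont (\<lambda>x. P_det l x s) x" for x unfolding P_det_Dd by (rule isCont_Dd)
        then show "\<exists>x. r i - \<delta> < x \<and> x < r i + \<delta> \<and> P_det l x s = 0"
          using ivt_strict[of "r i - \<delta>" "r i + \<delta>" "\<lambda>x. P_det l x s"] elim \<delta> \<open>i \<in> {..<l}\<close> by auto
      qed
      from bchoice[OF this] obtain g where g: "\<And>i. i < l \<Longrightarrow> r i - \<delta> < g i \<and> g i < r i + \<delta> \<and> P_det l (g i) s = 0"
        by auto
      have ginc: "g i < g k" if "i < k" "k < l" for i k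
        using g[of i] g[of k] sep[of i k] that by auto
      have "fr l j s = g j" by (rule fr_char[OF elim(2) ginc]) (use g j in auto)
      then show ?case using g[OF j] rf[OF j] \<delta>\<epsilon> by (auto simp: dist_real_def)
    qed
  qed
qed

lemma fr_nz:
  assumes t: "t > 0" and j: "j < l"
  shows "ev (pX (De l l)) (fr l j t) t 0 \<noteq> 0"
proof -
  obtain r where rinc: "\<And>i j. i < j \<Longrightarrow> j < l \<Longrightarrow> r i < r j"
    and rp: "\<And>x. P_det l x t = (\<Prod>j<l. (x::real) - r j)"
    and rf: "\<And>j. j < l \<Longrightarrow> fr l j t = r j"
    using fr_roots[OF t, of l] by blast
  have D1: "((\<lambda>s. ev (De l l) s t 0) has_real_derivative ev (pX (De l l)) (r j) t 0) (at (r j))"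
    using ex_chain[where a="\<lambda>x. x" and b="\<lambda>_. t" and c="\<lambda>_. 0" and e="De l l"
        and dX="C 1" and dM="C 0" and dI="C 0" and t="r j"] noI_De by simp
  define Q where "Q = (\<lambda>x. \<Prod>i\<in>{..<l} - {j}. (x::real) - r i)"
  have fac: "ev (De l l) x t 0 = (x - r j) * Q x" for x
    unfolding Pev[symmetric] rp Q_def using j by (subst prod.remove[of _ j]) auto
  have D2: "((\<lambda>s. ev (De l l) s t 0) has_real_derivative Q (r j)) (at (r j))"
  proof (subst CARAT_DERIV, intro exI conjI allI)
    fix z show "ev (De l l) z t 0 - ev (De l l) (r j) t 0 = Q z * (z - r j)"
      by (simp add: fac)
    show "isCont Q (r j)" unfolding Q_def by (intro continuous_intros)
  qed simp
  have "Q (r j) \<noteq> 0"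
  proof -
    have "r j - r i \<noteq> 0" if "i \<in> {..<l} - {j}" for i
      using that rinc[of i j] rinc[of j i] j by (cases i j rule: linorder_cases) auto
    then show ?thesis unfolding Q_def by (simp add: prod_zero_iff)
  qed
  then show ?thesis using DERIV_unique[OF D1 D2] rf[OF j] by simp
qed

lemma fr_zero:
  assumes s: "s > 0" and j: "j < l"
  shows "P_det l (fr l j s) s = 0"
proof -
  obtain r where rp: "\<And>x. P_det l x s = (\<Prod>j<l. (x::real) - r j)"
    and rf: "\<And>j. j < l \<Longrightarrow> fr l j s = r j"
    using fr_roots[OF s, of l] by blast
  show ?thesis using j by (simp add: rp rf prod_zero_iff) (use j in blast)
qed

lemma fr_smooth:
  assumes j: "j < l"
  shows "smooth_on (fr l j) {0<..}"
proof -
  define Pe where "Pe = De l l"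
  define a where "a = fr l j"
  define c where "c = (\<lambda>t. inverse (ev (pX Pe) (a t) t 0))"
  define dXe where "dXe = Mul (C (-1)) (Mul (pM Pe) I)"
  define dIe where "dIe = Mul (C (-1)) (Mul (Mul I I) (dx dXe (C 1) (C 0) (pX Pe)))"
  have noPe: "\<not> usesI Pe" by (simp add: Pe_def noI_De)
  have noPx: "\<not> usesI (pX Pe)" by (rule dx_noI) (use noPe in auto)
  have noPm: "\<not> usesI (pM Pe)" by (rule dx_noI) (use noPe in auto)
  have da: "(a has_real_derivative ev dXe (a t) t (c t)) (at t)" if t: "t \<in> {0<..}" for t
  proof -
    have "(a has_real_derivative - ev (pM Pe) (a t) t 0 / ev (pX Pe) (a t) t 0) (at t)"
    proof (rule implicit_deriv[OF open_greaterThan t])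
      show "ev Pe (a s) s 0 = 0" if "s \<in> {0<..}" for s
        using fr_zero[of s j l] that j by (simp add: Pe_def a_def Pev)
      show "isCont a t" unfolding a_def using fr_cont[of t j l] t j by simp
      show "ev (pX Pe) (a t) t 0 \<noteq> 0" unfolding a_def Pe_def using fr_nz[of t j l] t j by simp
    qed
    moreover have "ev (pM Pe) (a t) t (c t) = ev (pM Pe) (a t) t 0" by (rule ex_noI[OF noPm])
    ultimately show ?thesis by (simp add: dXe_def c_def divide_inverse)
  qed
  have dc: "(c has_real_derivative ev dIe (a t) t (c t)) (at t)" if t: "t \<in> {0<..}" for t
  proof -
    have G: "((\<lambda>s. ev (pX Pe) (a s) ((\<lambda>s. s) s) (c s)) has_real_derivative
        ev (dx dXe (C 1) (C 0) (pX Pe)) (a t) ((\<lambda>s. s) t) (c t)) (at t)"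
      by (rule ex_chain) (use da[OF t] noPx in auto)
    have geq: "ev (pX Pe) (a s) s (c s) = ev (pX Pe) (a s) s 0" for s by (rule ex_noI[OF noPx])
    have nz: "ev (pX Pe) (a t) t 0 \<noteq> 0" unfolding a_def Pe_def using fr_nz[of t j l] t j by simp
    have "((\<lambda>s. inverse (ev (pX Pe) (a s) s 0)) has_real_derivative
        - (ev (dx dXe (C 1) (C 0) (pX Pe)) (a t) t (c t) * inverse ((ev (pX Pe) (a t) t 0) ^ Suc (Suc 0)))) (at t)"
      by (rule DERIV_inverse_fun) (use G nz in \<open>simp_all add: geq\<close>)
    moreover have fe: "(\<lambda>s. inverse (ev (pX Pe) (a s) s 0)) = c" by (simp add: c_def)
    moreover have ve: "- (ev (dx dXe (C 1) (C 0) (pX Pe)) (a t) t (c t) * inverse ((ev (pX Pe) (a t) t 0) ^ Suc (Suc 0)))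
        = ev dIe (a t) t (c t)"
      by (simp add: dIe_def c_def inverse_mult_distrib algebra_simps)
    ultimately show ?thesis by simp
  qed
  have "smooth_on a {0<..}" by (rule ex_smooth[OF open_greaterThan da dc])
  then show ?thesis by (simp add: a_def)
qed

theorem lemma1p6:
  fixes l :: nat
  shows "\<exists>f :: nat \<Rightarrow> real \<Rightarrow> real.
           (\<forall>j<l. smooth_on (f j) {0<..}) \<and>
           (\<forall>\<mu>>0. \<forall>j. Suc j < l \<longrightarrow> f j \<mu> < f (Suc j) \<mu>) \<and>
           {(x, \<mu>). \<mu> > 0 \<and> P_det l x \<mu> = (0::real)}
             = {(f j \<mu>, \<mu>) | j \<mu>. j < l \<and> \<mu> > 0}"
proof (intro exI[of _ "fr l"] conjI allI impI)
  show "smooth_on (fr l j) {0<..}" if "j < l" for j using fr_smooth[OF that] .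
  show "fr l j \<mu> < fr l (Suc j) \<mu>" if mu: "\<mu> > 0" and js: "Suc j < l" for \<mu> j
  proof -
    obtain r where rinc: "\<And>i j. i < j \<Longrightarrow> j < l \<Longrightarrow> r i < r j"
      and rf: "\<And>j. j < l \<Longrightarrow> fr l j \<mu> = r j"
      using fr_roots[OF mu, of l] by blast
    show ?thesis using rinc[of j "Suc j"] rf[of j] rf[of "Suc j"] js by auto
  qed
  show "{(x, \<mu>). \<mu> > 0 \<and> P_det l x \<mu> = (0::real)} = {(fr l j \<mu>, \<mu>) | j \<mu>. j < l \<and> \<mu> > 0}"
  proof (intro equalityI subsetI)
    fix p assume "p \<in> {(x, \<mu>). \<mu> > 0 \<and> P_det l x \<mu> = (0::real)}"
    then obtain x \<mu> where p: "p = (x, \<mu>)" "\<mu> > 0" "P_det l x \<mu> = 0" by auto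
    obtain r where rp: "\<And>x. P_det l x \<mu> = (\<Prod>j<l. (x::real) - r j)"
      and rf: "\<And>j. j < l \<Longrightarrow> fr l j \<mu> = r j"
      using fr_roots[OF p(2), of l] by blast
    obtain j where j: "j < l" "x = r j" using p(3) by (auto simp: rp prod_zero_iff)
    then have "x = fr l j \<mu>" using rf[OF j(1)] by simp
    then show "p \<in> {(fr l j \<mu>, \<mu>) | j \<mu>. j < l \<and> \<mu> > 0}" using p j by blast
  next
    fix p assume "p \<in> {(fr l j \<mu>, \<mu>) | j \<mu>. j < l \<and> \<mu> > 0}"
    then obtain j \<mu> where p: "p = (fr l j \<mu>, \<mu>)" "j < l" "\<mu> > 0" by auto
    then show "p \<in> {(x, \<mu>). \<mu> > 0 \<and> P_det l x \<mu> = (0::real)}" using fr_zero[OF p(3) p(2)] by auto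
  qed
qed

end
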